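(* For every integer $n\ge 0$, $$B_{n+1}\!\left(t+\frac{1}{t}\right)=\sum_{i=0}^{n}t^{\nu(n-i)-\nu(i)}.$$
   Context: The Stern polynomials $B_n(t)\in\mathbb{Z}[t]$, $n\ge 0$, are defined by $B_0(t)=0$, $B_1(t)=1$, $B_{2n}(t)=tB_n(t)$ and $B_{2n+1}(t)=B_n(t)+B_{n+1}(t)$ for $n\ge 1$. For $n\ge 0$, $\nu(n)$ denotes the number of digits $1$ in the binary representation of $n$. *)

theory Defs
  imports "HOL-Computational_Algebra.Polynomial"
begin

function stern :: "nat \<Rightarrow> int poly" where
  "stern n = (if n = 0 then 0 else if n = 1 then 1
              else if even n then [:0, 1:] * stern (n div 2)
              else stern (n div 2) + stern (n div 2 + 1))"
  by auto
termination
  by (relation "measure id") (auto elim!: oddE)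

declare stern.simps [simp del]

fun nu :: "nat \<Rightarrow> nat" where
  "nu n = (if n = 0 then 0 else n mod 2 + nu (n div 2))"

declare nu.simps [simp del]

end

theory Submission
  imports Defs
begin

lemma nu0: "nu 0 = 0" by (subst nu.simps) simp

lemma nu_even: "nu (2*a) = nu a"
  by (cases "a = 0") (simp add: nu0, subst nu.simps, simp)

lemma nu_odd: "nu (2*a+1) = nu a + 1"
  by (subst nu.simps) auto

lemma nu_odd': "nu (Suc (2*a)) = nu a + 1"
  using nu_odd by simp

lemma sum_split2: "(\<Sum>i<2*(k::nat). h i) = (\<Sum>j<k. h (2*j)) + (\<Sum>j<k. (h (2*j+1)::real))"
  by (induction k) (auto simp: algebra_simps)

definition S :: "real \<Rightarrow> nat \<Rightarrow> real" where
  "S t n = (\<Sum>i<n+1. t powi (int (nu (n - i)) - int (nu i)))"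

lemma S_odd:
  assumes t: "t \<noteq> 0"
  shows "S t (2*k+1) = (t + 1/t) * S t k"
proof -
  have "S t (2*k+1) = (\<Sum>i<2*(k+1). t powi (int (nu (2*k+1 - i)) - int (nu i)))"
    unfolding S_def by (simp add: algebra_simps)
  also have "\<dots> = (\<Sum>j<k+1. t powi (int (nu (2*k+1 - 2*j)) - int (nu (2*j))))
      + (\<Sum>j<k+1. t powi (int (nu (2*k+1 - (2*j+1))) - int (nu (2*j+1))))"
    by (rule sum_split2)
  also have "(\<Sum>j<k+1. t powi (int (nu (2*k+1 - 2*j)) - int (nu (2*j))))
      = (\<Sum>j<k+1. t * t powi (int (nu (k - j)) - int (nu j)))"
  proof (rule sum.cong)
    fix j assume "j \<in> {..<k+1}"
    then have "2*k+1-2*j = 2*(k-j)+1" by auto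
    then have "int (nu (2*k+1 - 2*j)) - int (nu (2*j)) = (int (nu (k - j)) - int (nu j)) + 1"
      by (simp add: nu_odd nu_odd' nu_even)
    then show "t powi (int (nu (2*k+1 - 2*j)) - int (nu (2*j))) = t * t powi (int (nu (k - j)) - int (nu j))"
      using t by (simp add: power_int_add_1)
  qed simp
  also have "(\<Sum>j<k+1. t powi (int (nu (2*k+1 - (2*j+1))) - int (nu (2*j+1))))
      = (\<Sum>j<k+1. (1/t) * t powi (int (nu (k - j)) - int (nu j)))"
  proof (rule sum.cong)
    fix j assume "j \<in> {..<k+1}"
    then have "2*k+1-(2*j+1) = 2*(k-j)" by auto
    then have "int (nu (2*k+1 - (2*j+1))) - int (nu (2*j+1)) = (int (nu (k - j)) - int (nu j)) + (-1)"
      by (simp add: nu_odd nu_odd' nu_even)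
    then have "t powi (int (nu (2*k+1 - (2*j+1))) - int (nu (2*j+1))) = t powi ((int (nu (k - j)) - int (nu j)) + (-1))"
      by (simp only:)
    also have "\<dots> = t powi (int (nu (k - j)) - int (nu j)) * t powi (-1)"
      using t by (rule power_int_add[OF disjI1])
    finally show "t powi (int (nu (2*k+1 - (2*j+1))) - int (nu (2*j+1))) = (1/t) * t powi (int (nu (k - j)) - int (nu j))"
      by (simp add: power_int_minus field_simps)
  qed simp
  finally have "S t (2*k+1) = t * S t k + (1/t) * S t k"
    by (simp only: sum_distrib_left[symmetric] S_def[of t k])
  then show ?thesis by (simp add: distrib_right)
qed

lemma S_even:
  assumes t: "t \<noteq> 0"
  shows "S t (2*k+2) = S t k + S t (k+1)"
proof -
  have "S t (2*k+2) = (\<Sum>i<2*(k+1). t powi (int (nu (2*k+2 - i)) - int (nu i)))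
        + t powi (int (nu 0) - int (nu (2*k+2)))"
    unfolding S_def by (simp add: algebra_simps)
  also have "(\<Sum>i<2*(k+1). t powi (int (nu (2*k+2 - i)) - int (nu i)))
     = (\<Sum>j<k+1. t powi (int (nu (2*k+2 - 2*j)) - int (nu (2*j))))
      + (\<Sum>j<k+1. t powi (int (nu (2*k+2 - (2*j+1))) - int (nu (2*j+1))))"
    by (rule sum_split2)
  also have "(\<Sum>j<k+1. t powi (int (nu (2*k+2 - 2*j)) - int (nu (2*j))))
      = (\<Sum>j<k+1. t powi (int (nu (k+1 - j)) - int (nu j)))"
  proof (rule sum.cong)
    fix j assume "j \<in> {..<k+1}"
    then have "2*k+2-2*j = 2*(k+1-j)" by auto
    then show "t powi (int (nu (2*k+2 - 2*j)) - int (nu (2*j))) = t powi (int (nu (k+1 - j)) - int (nu j))"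
      by (simp add: nu_even)
  qed simp
  also have "(\<Sum>j<k+1. t powi (int (nu (2*k+2 - (2*j+1))) - int (nu (2*j+1))))
      = (\<Sum>j<k+1. t powi (int (nu (k - j)) - int (nu j)))"
  proof (rule sum.cong)
    fix j assume "j \<in> {..<k+1}"
    then have "2*k+2-(2*j+1) = 2*(k-j)+1" by auto
    then show "t powi (int (nu (2*k+2 - (2*j+1))) - int (nu (2*j+1))) = t powi (int (nu (k - j)) - int (nu j))"
      by (simp add: nu_odd nu_odd' nu_even)
  qed simp
  also have "t powi (int (nu 0) - int (nu (2*k+2))) = t powi (int (nu (k+1-(k+1))) - int (nu (k+1)))"
    using nu_even[of "k+1"] by (simp add: algebra_simps)
  finally show ?thesis unfolding S_def by (simp add: algebra_simps)
qed

lemma stern_even: "stern (2*k+2) = [:0,1:] * stern (k+1)"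
  by (subst stern.simps) simp

lemma stern_odd: "k \<ge> 1 \<Longrightarrow> stern (2*k+1) = stern k + stern (k+1)"
  by (subst stern.simps) simp

lemma stern1: "stern (Suc 0) = 1" by (subst stern.simps) simp

lemma mp_add: "poly (map_poly (of_int :: int \<Rightarrow> real) (p + q)) x
   = poly (map_poly of_int p) x + poly (map_poly of_int q) x"
proof -
  have "map_poly (of_int :: int \<Rightarrow> real) (p + q) = map_poly of_int p + map_poly of_int q"
    by (intro poly_eqI) (simp add: coeff_map_poly)
  then show ?thesis by simp
qed

lemma mp_x: "poly (map_poly (of_int :: int \<Rightarrow> real) ([:0,1:] * p)) x
   = x * poly (map_poly of_int p) x"
proof -
  have "[:0,1:] * p = pCons 0 p" by simp
  then have "map_poly (of_int :: int \<Rightarrow> real) ([:0,1:] * p) = pCons 0 (map_poly of_int p)"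
    by (simp add: map_poly_pCons)
  then show ?thesis by simp
qed

lemma main:
  assumes t: "t \<noteq> 0"
  shows "poly (map_poly of_int (stern (n + 1))) (t + 1 / t) = S t n"
proof (induction n rule: less_induct)
  case (less n)
  show ?case
  proof (cases "n = 0")
    case True
    then show ?thesis by (simp add: S_def stern1 nu0)
  next
    case False
    show ?thesis
    proof (cases "even n")
      case True
      define k where "k = n div 2 - 1"
      have k: "n = 2*k+2" using False True unfolding k_def by presburger
      have st: "stern (n+1) = stern (k+1) + stern (k+1+1)"
        using k stern_odd[of "k+1"] by simp
      have "k < n" "k+1 < n" using k by simp_all
      then have h1: "poly (map_poly of_int (stern (k + 1))) (t + 1 / t) = S t k"
        and h2: "poly (map_poly of_int (stern (k + 1 + 1))) (t + 1 / t) = S t (k+1)"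
        using less.IH by blast+
      have "S t n = S t k + S t (k+1)" using k S_even[OF t, of k] by simp
      then show ?thesis unfolding st using h1 h2
        by (simp add: mp_add)
    next
      case odd: False
      define k where "k = n div 2"
      have k: "n = 2*k+1" using odd unfolding k_def by presburger
      have st: "stern (n+1) = [:0,1:] * stern (k+1)"
        using k stern_even[of k] by simp
      have "k < n" using k by simp
      then have h1: "poly (map_poly of_int (stern (k + 1))) (t + 1 / t) = S t k"
        using less.IH by blast
      have "S t n = (t + 1/t) * S t k" using k S_odd[OF t, of k] by simp
      then show ?thesis unfolding st using h1
        by (simp only: mp_x)
    qed
  qed
qed

theorem theorem3p7:
  fixes n :: nat and t :: real
  assumes "t \<noteq> 0"
  shows "poly (map_poly of_int (stern (n + 1))) (t + 1 / t)
           = (\<Sum>i = 0..n. t powi (int (nu (n - i)) - int (nu i)))"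
proof -
  have e: "{..<n+1} = {0..n}" by auto
  show ?thesis using main[OF assms, of n] unfolding S_def e .
qed

end
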